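(* For every non-integer rational number $d>1$, there exist a deterministic discounted-sum automaton $\mathcal{A}$ with discount factor $d$ and a rational number $r$ such that the cut-point language $L^{\ge r}=\{w\in L(\mathcal{A}) : wt_{\mathcal{A}}(w)\ge r\}$ is not $\omega$-regular.
   Context: For a sequence $A$ and discount factor $d>1$, $\mathrm{DS}(A,d)=\sum_{i\ge0}A[i]/d^i$. A discounted-sum automaton is a weighted $\omega$-automaton $(\mathcal{M},\gamma,\mathrm{DS}(\cdot,d))$ where $\mathcal{M}$ is a B\"uchi automaton all of whose states are accepting and $\gamma$ assigns rational weights to transitions; a run's weight is the discounted sum of its weight sequence, and $wt_{\mathcal{A}}(w)$ is the supremum of the weights of runs on $w$. It is deterministic if $\mathcal{M}$ has one initial state and at most one successor per state and letter. *)

theory Defs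
  imports Complex_Main
begin

record ('q, 'a) buchi =
  states :: "'q set"
  alph   :: "'a set"
  init   :: "'q set"
  trans  :: "('q \<times> 'a \<times> 'q) set"
  acc    :: "'q set"

definition buchi_wf :: "('q, 'a) buchi \<Rightarrow> bool" where
  "buchi_wf A \<longleftrightarrow> finite (states A) \<and> finite (alph A) \<and> init A \<subseteq> states A
     \<and> trans A \<subseteq> states A \<times> alph A \<times> states A \<and> acc A \<subseteq> states A"

definition is_run :: "('q, 'a) buchi \<Rightarrow> (nat \<Rightarrow> 'a) \<Rightarrow> (nat \<Rightarrow> 'q) \<Rightarrow> bool" where
  "is_run A w r \<longleftrightarrow> r 0 \<in> init A \<and> (\<forall>i. (r i, w i, r (Suc i)) \<in> trans A)"

definition accepting_run :: "('q, 'a) buchi \<Rightarrow> (nat \<Rightarrow> 'a) \<Rightarrow> (nat \<Rightarrow> 'q) \<Rightarrow> bool" where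
  "accepting_run A w r \<longleftrightarrow> is_run A w r \<and> infinite {i. r i \<in> acc A}"

definition lang :: "('q, 'a) buchi \<Rightarrow> (nat \<Rightarrow> 'a) set" where
  "lang A = {w. (\<forall>i. w i \<in> alph A) \<and> (\<exists>r. accepting_run A w r)}"

text \<open>omega-regular = recognised by some Buchi automaton over the same alphabet
  (state sets taken inside nat, which is no loss of generality for finite state sets).\<close>
definition omega_regular :: "'a set \<Rightarrow> (nat \<Rightarrow> 'a) set \<Rightarrow> bool" where
  "omega_regular \<Sigma> L \<longleftrightarrow> (\<exists>B :: (nat, 'a) buchi. buchi_wf B \<and> alph B = \<Sigma> \<and> lang B = L)"

definition DS :: "(nat \<Rightarrow> real) \<Rightarrow> real \<Rightarrow> real" where
  "DS s d = (\<Sum>i. s i / d ^ i)"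

definition ds_automaton :: "('q, 'a) buchi \<Rightarrow> bool" where
  "ds_automaton M \<longleftrightarrow> buchi_wf M \<and> acc M = states M"

definition run_weight :: "('q \<times> 'a \<times> 'q \<Rightarrow> rat) \<Rightarrow> real \<Rightarrow> (nat \<Rightarrow> 'a) \<Rightarrow> (nat \<Rightarrow> 'q) \<Rightarrow> real" where
  "run_weight \<gamma> d w r = DS (\<lambda>i. real_of_rat (\<gamma> (r i, w i, r (Suc i)))) d"

definition wt :: "('q, 'a) buchi \<Rightarrow> ('q \<times> 'a \<times> 'q \<Rightarrow> rat) \<Rightarrow> real \<Rightarrow> (nat \<Rightarrow> 'a) \<Rightarrow> real" where
  "wt M \<gamma> d w = Sup {run_weight \<gamma> d w r | r. accepting_run M w r}"

definition deterministic :: "('q, 'a) buchi \<Rightarrow> bool" where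
  "deterministic M \<longleftrightarrow> (\<exists>q. init M = {q}) \<and>
     (\<forall>q a q1 q2. (q, a, q1) \<in> trans M \<and> (q, a, q2) \<in> trans M \<longrightarrow> q1 = q2)"

definition cutpoint_lang :: "('q, 'a) buchi \<Rightarrow> ('q \<times> 'a \<times> 'q \<Rightarrow> rat) \<Rightarrow> real \<Rightarrow> real \<Rightarrow> (nat \<Rightarrow> 'a) set" where
  "cutpoint_lang M \<gamma> d r = {w \<in> lang M. wt M \<gamma> d w \<ge> r}"

end

theory Submission
  imports Defs
begin

fun aseq :: "int \<Rightarrow> int \<Rightarrow> nat \<Rightarrow> int" where
  "aseq p q 0 = 1"
| "aseq p q (Suc n) = p * (aseq p q n mod q ^ Suc n)"

definition xseq :: "int \<Rightarrow> int \<Rightarrow> nat \<Rightarrow> nat" where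
  "xseq p q n = nat (aseq p q n div q ^ Suc n)"

definition tseq :: "int \<Rightarrow> int \<Rightarrow> nat \<Rightarrow> real" where
  "tseq p q n = of_int (aseq p q n) / of_int q ^ Suc n"

lemma aseq_nonneg: "p > 0 \<Longrightarrow> q > 0 \<Longrightarrow> aseq p q n \<ge> 0"
  by (cases n) auto

lemma aseq_ndvd:
  assumes "q \<ge> 2" "coprime p q"
  shows "\<not> q dvd aseq p q n"
proof (induction n)
  case 0
  show ?case
  proof
    assume "q dvd aseq p q 0"
    then have "q dvd 1" by simp
    then have "q \<le> 1" by (rule zdvd_imp_le) simp
    with assms(1) show False by simp
  qed
next
  case (Suc n)
  show ?case
  proof
    assume "q dvd aseq p q (Suc n)"
    then have "q dvd p * (aseq p q n mod q ^ Suc n)" by simp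
    then have "q dvd aseq p q n mod q ^ Suc n"
      using assms(2) by (metis coprime_commute coprime_dvd_mult_right_iff)
    moreover have "aseq p q n mod q ^ Suc n mod q = aseq p q n mod q"
      by (rule mod_mod_cancel) simp
    ultimately have "aseq p q n mod q = 0" by (metis dvd_eq_mod_eq_0)
    then have "q dvd aseq p q n" by (rule mod_0_imp_dvd)
    with Suc show False by simp
  qed
qed

lemma aseq_bound:
  assumes "q \<ge> 2" "p > q"
  shows "aseq p q (Suc n) < p * q ^ Suc n"
proof -
  have "aseq p q n mod q ^ Suc n < q ^ Suc n" using assms by simp
  then show ?thesis using assms by simp
qed

lemma xseq_le:
  assumes "q \<ge> 2" "p > q"
  shows "xseq p q n \<le> nat p"
proof (cases n)
  case 0 then show ?thesis using assms by (simp add: xseq_def)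
next
  case (Suc k)
  have a: "aseq p q n < p * q ^ Suc n" using aseq_bound[OF assms, of k] Suc assms
    by (smt (verit) mult_left_mono power_increasing_iff zero_less_power le_less Suc_n_not_le_n)
  have Q: "q ^ Suc n > 0" using assms by simp
  have "aseq p q n div q ^ Suc n * q ^ Suc n \<le> aseq p q n"
    using Q by (smt (verit) div_mult_mod_eq pos_mod_sign)
  then have "aseq p q n div q ^ Suc n * q ^ Suc n < p * q ^ Suc n" using a by linarith
  then have "aseq p q n div q ^ Suc n \<le> p"
    using Q by (smt (verit) mult_right_mono)
  then show ?thesis by (simp add: xseq_def)
qed

lemma tseq_rec:
  assumes "q \<ge> 2" "p > q"
  shows "tseq p q n = real (xseq p q n) + tseq p q (Suc n) / (of_int p / of_int q)"
proof -
  define Q where "Q = q ^ Suc n"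
  define a where "a = aseq p q n"
  have Q: "Q > 0" using assms by (simp add: Q_def)
  have a0: "a \<ge> 0" using aseq_nonneg assms by (simp add: a_def)
  have dv: "a div Q \<ge> 0" using a0 Q by (simp add: pos_imp_zdiv_nonneg_iff)
  have eq: "a = a div Q * Q + a mod Q" by simp
  have "tseq p q (Suc n) / (of_int p / of_int q) = of_int (a mod Q) / of_int Q"
    using assms Q by (simp add: tseq_def a_def Q_def field_simps)
  moreover have "real (xseq p q n) = of_int (a div Q)"
    using dv by (simp add: xseq_def a_def Q_def)
  moreover have "tseq p q n = of_int a / of_int Q" by (simp add: tseq_def a_def Q_def)
  moreover have "of_int a / of_int Q = (of_int (a div Q) :: real) + of_int (a mod Q) / of_int Q"
  proof -
    have "(of_int a :: real) = of_int (a div Q) * of_int Q + of_int (a mod Q)"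
      by (metis eq of_int_add of_int_mult)
    then show ?thesis using Q by (simp add: field_simps)
  qed
  ultimately show ?thesis by simp
qed

lemma tseq_bound:
  assumes "q \<ge> 2" "p > q"
  shows "0 \<le> tseq p q n \<and> tseq p q n \<le> of_int p"
proof (cases n)
  case 0
  have "1 / real_of_int q \<le> 1" using assms by simp
  moreover have "(1::real) \<le> of_int p" using assms by simp
  ultimately have "1 / real_of_int q \<le> of_int p" by linarith
  then show ?thesis using 0 assms by (simp add: tseq_def)
next
  case (Suc k)
  have a: "aseq p q n < p * q ^ n" using aseq_bound[OF assms, of k] Suc by simp
  have Q: "(of_int q :: real) ^ Suc n > 0" using assms by simp
  have "(of_int (aseq p q n) :: real) \<le> of_int p * of_int q ^ Suc n"
  proof -
    have "p * q ^ n \<le> p * q ^ Suc n" using assms by simp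
    with a have "aseq p q n \<le> p * q ^ Suc n" by linarith
    then show ?thesis by (metis of_int_le_iff of_int_mult of_int_power)
  qed
  then show ?thesis using Q aseq_nonneg[of p q n] assms
    by (simp add: tseq_def divide_le_eq)
qed

lemma tseq_inj:
  assumes "q \<ge> 2" "p > q" "coprime p q" "n < m"
  shows "tseq p q n \<noteq> tseq p q m"
proof
  assume "tseq p q n = tseq p q m"
  then have "(of_int (aseq p q n) :: real) * of_int q ^ Suc m = of_int (aseq p q m) * of_int q ^ Suc n"
    using assms by (simp add: tseq_def field_simps)
  then have e: "aseq p q n * q ^ Suc m = aseq p q m * q ^ Suc n"
    by (metis of_int_eq_iff of_int_mult of_int_power)
  have sm: "Suc m = Suc n + (m - n)" using assms(4) by simp
  have "q ^ Suc m = q ^ Suc n * q ^ (m - n)" by (subst sm, rule power_add)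
  note pw = this
  have "aseq p q n * q ^ (m - n) * q ^ Suc n = aseq p q n * (q ^ Suc n * q ^ (m - n))"
    by (simp add: mult_ac)
  also have "\<dots> = aseq p q n * q ^ Suc m" by (simp only: pw)
  also have "\<dots> = aseq p q m * q ^ Suc n" by (rule e)
  finally have "aseq p q n * q ^ (m - n) * q ^ Suc n = aseq p q m * q ^ Suc n" .
  moreover have "q ^ Suc n \<noteq> 0" using assms by simp
  ultimately have "aseq p q m = aseq p q n * q ^ (m - n)" by simp
  moreover have "q dvd q ^ (m - n)" using assms(4) by (simp add: dvd_power)
  ultimately have "q dvd aseq p q m" by simp
  with aseq_ndvd[OF assms(1,3)] show False by blast
qed

lemma sum_rec_gen:
  fixes t :: "nat \<Rightarrow> real" and D :: real
  assumes "D \<noteq> 0" "\<And>j. t j = x j + t (Suc j) / D"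
  shows "(\<Sum>i<k. x (n + i) / D ^ i) = t n - t (n + k) / D ^ k"
proof (induction k)
  case 0 then show ?case by simp
next
  case (Suc k)
  have r: "t (n + k) = x (n + k) + t (Suc (n + k)) / D" by (rule assms(2))
  have "t (n + k) / D ^ k = x (n + k) / D ^ k + t (Suc (n + k)) / D / D ^ k"
    by (simp only: r add_divide_distrib)
  also have "t (Suc (n + k)) / D / D ^ k = t (Suc (n + k)) / D ^ Suc k"
    by (simp only: divide_divide_eq_left power_Suc)
  finally have "t (n + k) / D ^ k = x (n + k) / D ^ k + t (Suc (n + k)) / D ^ Suc k" .
  then show ?case using Suc by simp
qed

lemma tseq_sum:
  assumes "q \<ge> 2" "p > q"
  shows "(\<Sum>i<k. real (xseq p q (n + i)) / (of_int p / of_int q) ^ i)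
     = tseq p q n - tseq p q (n + k) / (of_int p / of_int q) ^ k"
proof (rule sum_rec_gen[where t="tseq p q"])
  show "of_int p / of_int q \<noteq> (0::real)" using assms by simp
  show "tseq p q j = real (xseq p q j) + tseq p q (Suc j) / (of_int p / of_int q)" for j
    by (rule tseq_rec[OF assms])
qed

definition spl :: "(nat \<Rightarrow> 'a) \<Rightarrow> nat \<Rightarrow> (nat \<Rightarrow> 'a) \<Rightarrow> nat \<Rightarrow> 'a" where
  "spl x n w i = (if i < n then x i else w (i - n))"

definition reach :: "('q, 'a) buchi \<Rightarrow> (nat \<Rightarrow> 'a) \<Rightarrow> nat \<Rightarrow> 'q set" where
  "reach B x n = {\<rho> n | \<rho>. \<rho> 0 \<in> init B \<and> (\<forall>i<n. (\<rho> i, x i, \<rho> (Suc i)) \<in> trans B)}"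

lemma reach_sub:
  assumes "buchi_wf B"
  shows "reach B x n \<subseteq> states B"
proof
  fix s assume "s \<in> reach B x n"
  then obtain \<rho> where r: "s = \<rho> n" "\<rho> 0 \<in> init B" "\<forall>i<n. (\<rho> i, x i, \<rho> (Suc i)) \<in> trans B"
    unfolding reach_def by blast
  show "s \<in> states B"
  proof (cases n)
    case 0 then show ?thesis using r assms by (auto simp: buchi_wf_def)
  next
    case (Suc k)
    then have "(\<rho> k, x k, \<rho> n) \<in> trans B" using r by auto
    then show ?thesis using r assms by (auto simp: buchi_wf_def)
  qed
qed

lemma reach_repeat:
  assumes "buchi_wf B"
  shows "\<exists>n m. n < m \<and> reach B x n = reach B x m"
proof -
  have fin: "finite (range (reach B x))"
    by (rule finite_subset[of _ "Pow (states B)"]) (use reach_sub[OF assms] assms in \<open>auto simp: buchi_wf_def\<close>)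
  have "\<not> inj (reach B x)"
    using fin finite_imageD by blast
  then obtain n m where "n \<noteq> m" "reach B x n = reach B x m" unfolding inj_def by blast
  then show ?thesis by (metis linorder_neq_iff)
qed

lemma reach_transfer:
  assumes eq: "reach B x n = reach B x m"
    and L: "spl x n w \<in> lang B"
    and aw: "\<forall>i. w i \<in> alph B" and ax: "\<forall>i. x i \<in> alph B"
  shows "spl x m w \<in> lang B"
proof -
  from L obtain \<rho> where acc: "accepting_run B (spl x n w) \<rho>" unfolding lang_def by blast
  then have r0: "\<rho> 0 \<in> init B" and rt: "\<And>i. (\<rho> i, spl x n w i, \<rho> (Suc i)) \<in> trans B"
    and inf: "infinite {i. \<rho> i \<in> acc B}"
    unfolding accepting_run_def is_run_def by auto
  have "\<rho> n \<in> reach B x n"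
    unfolding reach_def using r0 rt by (auto simp: spl_def intro!: exI[of _ \<rho>]) (metis (full_types))
  then have "\<rho> n \<in> reach B x m" using eq by simp
  then obtain \<rho>' where r': "\<rho>' m = \<rho> n" "\<rho>' 0 \<in> init B" "\<forall>i<m. (\<rho>' i, x i, \<rho>' (Suc i)) \<in> trans B"
    unfolding reach_def by auto
  define \<sigma> where "\<sigma> i = (if i < m then \<rho>' i else \<rho> (i - m + n))" for i
  have s0: "\<sigma> 0 \<in> init B"
    using r' by (cases "m = 0") (auto simp: \<sigma>_def)
  have st: "(\<sigma> i, spl x m w i, \<sigma> (Suc i)) \<in> trans B" for i
  proof (cases "Suc i < m")
    case True then show ?thesis using r' by (simp add: \<sigma>_def spl_def)
  next
    case False
    show ?thesis
    proof (cases "Suc i = m")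
      case True then show ?thesis using r' by (auto simp: \<sigma>_def spl_def)
    next
      case False
      with \<open>\<not> Suc i < m\<close> have im: "i \<ge> m" by simp
      have "(\<rho> (i - m + n), spl x n w (i - m + n), \<rho> (Suc (i - m + n))) \<in> trans B" by (rule rt)
      moreover have "spl x n w (i - m + n) = w (i - m)" by (simp add: spl_def)
      moreover have "Suc (i - m + n) = Suc i - m + n" using im by simp
      ultimately show ?thesis using im by (simp add: \<sigma>_def spl_def)
    qed
  qed
  have "infinite {i. \<sigma> i \<in> acc B}"
  proof
    assume f: "finite {i. \<sigma> i \<in> acc B}"
    have "{i. \<rho> i \<in> acc B} \<subseteq> {..<n} \<union> (\<lambda>i. i - m + n) ` {i. \<sigma> i \<in> acc B}"
    proof
      fix j assume j: "j \<in> {i. \<rho> i \<in> acc B}"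
      show "j \<in> {..<n} \<union> (\<lambda>i. i - m + n) ` {i. \<sigma> i \<in> acc B}"
      proof (cases "j < n")
        case False
        then have "\<not> (j - n + m < m)" "j - n + m - m + n = j" by auto
        then have "\<sigma> (j - n + m) = \<rho> j" unfolding \<sigma>_def by presburger
        moreover have "j = (j - n + m) - m + n" using False by simp
        ultimately have "j \<in> (\<lambda>i. i - m + n) ` {i. \<sigma> i \<in> acc B}"
          using j by (intro image_eqI[of _ _ "j - n + m"]) auto
        then show ?thesis by blast
      qed simp
    qed
    then have "finite {i. \<rho> i \<in> acc B}" using f by (meson finite_Un finite_imageI finite_lessThan finite_subset)
    with inf show False by simp
  qed
  moreover have "\<forall>i. spl x m w i \<in> alph B" using aw ax by (simp add: spl_def)
  ultimately show ?thesis unfolding lang_def accepting_run_def is_run_def using s0 st by blast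
qed

lemma summable_bounded:
  fixes D :: real
  assumes "D > 1" "\<forall>i. w i \<le> N"
  shows "summable (\<lambda>i. real (w i) / D ^ i)"
proof (rule summable_comparison_test)
  show "summable (\<lambda>i. real N * (1 / D) ^ i)"
    using assms by (intro summable_mult summable_geometric) simp
  show "\<exists>M. \<forall>n\<ge>M. norm (real (w n) / D ^ n) \<le> real N * (1 / D) ^ n"
    using assms by (auto simp: power_one_over divide_right_mono)
qed

lemma null_bounded:
  fixes D :: real and t :: "nat \<Rightarrow> real"
  assumes "D > 1" "\<forall>k. \<bar>t k\<bar> \<le> C"
  shows "(\<lambda>k. t k / D ^ k) \<longlonglongrightarrow> 0"
proof -
  have "(\<lambda>k. C * (1 / D) ^ k) \<longlonglongrightarrow> 0"
    using assms by (intro tendsto_mult_right_zero LIMSEQ_power_zero) simp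
  then have "Zfun (\<lambda>k. C * (1 / D) ^ k) sequentially" by (simp add: tendsto_Zfun_iff)
  moreover have "\<forall>k. norm (t k / D ^ k) \<le> norm (C * (1 / D) ^ k)"
  proof
    fix k
    have C: "C \<ge> 0" using assms(2) by (meson abs_ge_zero order_trans)
    have "norm (t k / D ^ k) = \<bar>t k\<bar> / D ^ k" using assms by (simp add: abs_divide)
    also have "\<dots> \<le> C / D ^ k" using assms by (simp add: divide_right_mono)
    also have "\<dots> = norm (C * (1 / D) ^ k)" using C assms by (simp add: power_one_over)
    finally show "norm (t k / D ^ k) \<le> norm (C * (1 / D) ^ k)" .
  qed
  ultimately have "Zfun (\<lambda>k. t k / D ^ k) sequentially" by (rule Zfun_le)
  then show ?thesis by (simp add: tendsto_Zfun_iff)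
qed

lemma ds_tail:
  assumes "q \<ge> 2" "p > q"
  shows "(\<lambda>i. real (xseq p q (n + i)) / (of_int p / of_int q) ^ i) sums tseq p q n"
proof -
  define D :: real where "D = of_int p / of_int q"
  have D: "D > 1" using assms by (simp add: D_def)
  have "(\<lambda>k. tseq p q (n + k) / D ^ k) \<longlonglongrightarrow> 0"
    using tseq_bound[OF assms] D by (intro null_bounded[where C="of_int p"]) auto
  then have "(\<lambda>k. tseq p q n - tseq p q (n + k) / D ^ k) \<longlonglongrightarrow> tseq p q n - 0"
    by (intro tendsto_diff tendsto_const)
  then show ?thesis unfolding sums_def using tseq_sum[OF assms] by (simp add: D_def)
qed

lemma ds_spl:
  fixes D :: real
  assumes "D > 1" "\<forall>i. w i \<le> N"
  shows "(\<lambda>i. real (spl x m w i) / D ^ i) sums ((\<Sum>i<m. real (x i) / D ^ i) + suminf (\<lambda>i. real (w i) / D ^ i) / D ^ m)"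
proof -
  have "(\<lambda>i. real (w i) / D ^ i) sums suminf (\<lambda>i. real (w i) / D ^ i)"
    using summable_bounded[OF assms] by (simp add: summable_sums)
  then have "(\<lambda>i. real (w i) / D ^ i / D ^ m) sums (suminf (\<lambda>i. real (w i) / D ^ i) / D ^ m)"
    by (rule sums_divide)
  moreover have "(\<lambda>i. real (spl x m w (i + m)) / D ^ (i + m)) = (\<lambda>i. real (w i) / D ^ i / D ^ m)"
    by (simp add: spl_def power_add)
  ultimately have "(\<lambda>i. real (spl x m w (i + m)) / D ^ (i + m)) sums (suminf (\<lambda>i. real (w i) / D ^ i) / D ^ m)"
    by simp
  then have "(\<lambda>i. real (spl x m w i) / D ^ i) sums (suminf (\<lambda>i. real (w i) / D ^ i) / D ^ m + (\<Sum>i<m. real (spl x m w i) / D ^ i))"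
    using sums_iff_shift[where f="\<lambda>i. real (spl x m w i) / D ^ i"] by blast
  moreover have "(\<Sum>i<m. real (spl x m w i) / D ^ i) = (\<Sum>i<m. real (x i) / D ^ i)"
    by (simp add: spl_def)
  ultimately show ?thesis by (simp add: add.commute)
qed

lemma key:
  assumes pq: "q \<ge> 2" "p > q"
    and eq: "reach B (xseq p q) n = reach B (xseq p q) m"
    and LB: "lang B = {w. (\<forall>i. w i \<le> nat p) \<and>
                tseq p q 0 \<le> suminf (\<lambda>i. real (w i) / (of_int p / of_int q) ^ i)}"
    and AB: "alph B = {0..nat p}"
  shows "tseq p q m \<le> tseq p q n"
proof -
  define D :: real where "D = of_int p / of_int q"
  have D: "D > 1" using pq by (simp add: D_def)
  define x where "x = xseq p q"
  define wn where "wn i = x (n + i)" for i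
  have xb: "\<forall>i. x i \<le> nat p" using xseq_le[OF pq] by (simp add: x_def)
  have wb: "\<forall>i. wn i \<le> nat p" using xb by (simp add: wn_def)
  have sx: "spl x n wn = x" by (rule ext) (simp add: spl_def wn_def)
  have t0: "(\<lambda>i. real (x i) / D ^ i) sums tseq p q 0"
    using ds_tail[OF pq, of 0] by (simp add: x_def D_def)
  have "x \<in> lang B" using LB xb t0 by (simp add: sums_iff D_def)
  then have "spl x n wn \<in> lang B" using sx by simp
  then have "spl x m wn \<in> lang B"
    by (rule reach_transfer[OF eq[folded x_def]]) (use wb xb AB in auto)
  then have ge: "tseq p q 0 \<le> suminf (\<lambda>i. real (spl x m wn i) / D ^ i)"
    using LB by (simp add: D_def)
  have "suminf (\<lambda>i. real (spl x m wn i) / D ^ i)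
     = (\<Sum>i<m. real (x i) / D ^ i) + suminf (\<lambda>i. real (wn i) / D ^ i) / D ^ m"
    using ds_spl[OF D wb] by (simp add: sums_iff)
  also have "suminf (\<lambda>i. real (wn i) / D ^ i) = tseq p q n"
    using ds_tail[OF pq, of n] by (simp add: sums_iff wn_def x_def D_def)
  also have "(\<Sum>i<m. real (x i) / D ^ i) = tseq p q 0 - tseq p q m / D ^ m"
    using tseq_sum[OF pq, where k=m and n=0] by (simp add: x_def D_def)
  finally have "tseq p q 0 \<le> tseq p q 0 - tseq p q m / D ^ m + tseq p q n / D ^ m"
    using ge by simp
  then have "tseq p q m / D ^ m \<le> tseq p q n / D ^ m" by simp
  then show ?thesis using D by (simp add: divide_le_cancel)
qed

theorem theorem6:
  fixes d :: rat
  assumes "d > 1" and "d \<notin> \<int>"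
  shows "\<exists>(M :: (nat, nat) buchi) (\<gamma> :: nat \<times> nat \<times> nat \<Rightarrow> rat) (r :: rat).
           ds_automaton M \<and> deterministic M \<and>
           \<not> omega_regular (alph M) (cutpoint_lang M \<gamma> (real_of_rat d) (real_of_rat r))"
proof -
  obtain p q where qd: "quotient_of d = (p, q)" by (cases "quotient_of d") auto
  have q0: "q > 0" using qd quotient_of_denom_pos by blast
  have cop: "coprime p q" using qd quotient_of_coprime by blast
  have dpq: "d = of_int p / of_int q" using qd quotient_of_div by blast
  have "q \<noteq> 1"
  proof
    assume "q = 1" then have "d = of_int p" using dpq by simp
    then show False using assms(2) by (simp add: Ints_of_int)
  qed
  then have q2: "q \<ge> 2" using q0 by simp
  have "(of_int p :: rat) > of_int q" using assms(1) q0 dpq by (simp add: less_divide_eq)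
  then have pq: "p > q" by simp
  have Dr: "real_of_rat d = of_int p / of_int q" using dpq by (simp add: of_rat_divide)
  define N where "N = nat p"
  define M :: "(nat, nat) buchi" where
    "M = \<lparr>states = {0}, alph = {0..N}, init = {0}, trans = {(0, a, 0) | a. a \<le> N}, acc = {0}\<rparr>"
  define \<gamma> :: "nat \<times> nat \<times> nat \<Rightarrow> rat" where "\<gamma> = (\<lambda>(_, a, _). of_nat a)"
  define r :: rat where "r = 1 / of_int q"
  have dsM: "ds_automaton M" by (auto simp: M_def ds_automaton_def buchi_wf_def)
  have detM: "deterministic M" by (simp add: M_def deterministic_def)
  have runs: "accepting_run M w \<rho> \<longleftrightarrow> (\<forall>i. w i \<le> N) \<and> \<rho> = (\<lambda>_. 0)" for w \<rho>
  proof
    assume a: "accepting_run M w \<rho>"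
    then have "\<rho> 0 = 0" and t: "\<forall>i. (\<rho> i, w i, \<rho> (Suc i)) \<in> trans M"
      by (auto simp: accepting_run_def is_run_def M_def)
    moreover have "\<rho> (Suc i) = 0" "w i \<le> N" for i using t[rule_format, of i] by (auto simp: M_def)
    ultimately show "(\<forall>i. w i \<le> N) \<and> \<rho> = (\<lambda>_. 0)"
      by (metis (full_types) not0_implies_Suc) 
  next
    assume "(\<forall>i. w i \<le> N) \<and> \<rho> = (\<lambda>_. 0)"
    then show "accepting_run M w \<rho>" by (auto simp: accepting_run_def is_run_def M_def)
  qed
  have langM: "lang M = {w. \<forall>i. w i \<le> N}"
    using runs by (auto simp: lang_def M_def)
  have wtM: "wt M \<gamma> D w = suminf (\<lambda>i. real (w i) / D ^ i)" if "\<forall>i. w i \<le> N" for w D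
  proof -
    have "{run_weight \<gamma> D w \<rho> | \<rho>. accepting_run M w \<rho>} = {suminf (\<lambda>i. real (w i) / D ^ i)}"
      using that runs by (auto simp: run_weight_def DS_def \<gamma>_def)
    then show ?thesis by (simp add: wt_def)
  qed
  have t0: "tseq p q 0 = real_of_rat r" by (simp add: tseq_def r_def of_rat_divide)
  have CL: "cutpoint_lang M \<gamma> (real_of_rat d) (real_of_rat r) =
     {w. (\<forall>i. w i \<le> nat p) \<and> tseq p q 0 \<le> suminf (\<lambda>i. real (w i) / (of_int p / of_int q) ^ i)}"
    using wtM by (auto simp: cutpoint_lang_def langM Dr t0 N_def)
  have "\<not> omega_regular (alph M) (cutpoint_lang M \<gamma> (real_of_rat d) (real_of_rat r))"
  proof
    assume "omega_regular (alph M) (cutpoint_lang M \<gamma> (real_of_rat d) (real_of_rat r))"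
    then obtain B :: "(nat, nat) buchi" where B: "buchi_wf B" "alph B = {0..nat p}"
      "lang B = {w. (\<forall>i. w i \<le> nat p) \<and> tseq p q 0 \<le> suminf (\<lambda>i. real (w i) / (of_int p / of_int q) ^ i)}"
      unfolding omega_regular_def CL by (auto simp: M_def N_def)
    obtain n m where nm: "n < m" "reach B (xseq p q) n = reach B (xseq p q) m"
      using reach_repeat[OF B(1)] by blast
    have "tseq p q m \<le> tseq p q n" by (rule key[OF q2 pq nm(2) B(3) B(2)])
    moreover have "tseq p q n \<le> tseq p q m" by (rule key[OF q2 pq nm(2)[symmetric] B(3) B(2)])
    ultimately show False using tseq_inj[OF q2 pq cop nm(1)] by simp
  qed
  note nr = this
  show ?thesis
    apply (rule exI[of _ M], rule exI[of _ \<gamma>], rule exI[of _ r])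
    using dsM detM nr by blast
qed

end
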